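(* Let $G=(V,E)$ with weight $\mu$ be an infinite, connected, locally finite weighted graph satisfying condition $(p_0)$, let $m>1$, and fix $o\in V$. Let $(p,q)\in G_3=\{(p,q): p<0,\ m-1<q<m\}$. Suppose there exist constants $C>0$ and $n_1$ such that $$W_o(n)\le C\, n^{\frac{q}{q-m+1}}(\ln n)^{\frac{m-1}{q-m+1}}\quad\text{for all } n\ge n_1.$$ Then the inequality $\Delta_m u+u^p|\nabla u|^q\le 0$ on $V$ admits no nontrivial positive solution.
   Context: Setting: $G=(V,E)$ is an infinite, connected, locally finite graph with no loops and no multiple edges; $x\sim y$ means $x$ and $y$ are joined by an edge. A weight is a symmetric function $\mu:V\times V\to[0,\infty)$ with $\mu_{xy}=\mu_{yx}>0$ if and only if $x\sim y$; the vertex measure is $\mu(x)=\sum_{y\sim x}\mu_{xy}$. For $m>1$ and $u:V\to\mathbb R$, $\Delta_m u(x)=\frac{1}{\mu(x)}\sum_{y\sim x}\mu_{xy}|u(y)-u(x)|^{m-2}(u(y)-u(x))$ and $|\nabla u(x)|=\big(\sum_{y\sim x}\frac{\mu_{xy}}{2\mu(x)}(u(y)-u(x))^2\big)^{1/2}$. Condition $(p_0)$: there is a constant $p_0>1$ such that $\mu_{xy}/\mu(x)\ge 1/p_0$ for all $x\sim y$. $d(x,y)$ is the graph (shortest path) distance, $B(o,n)=\{x\in V: d(o,x)\le n\}$, and $W_o(n)=\sum_{x\in B(o,n),\,y\in V,\,d(o,x)<d(o,y)}\mu_{xy}$. A nontrivial positive solution of $\Delta_m u+u^p|\nabla u|^q\le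 0$ is a non-constant function $u:V\to(0,\infty)$ such that $\Delta_m u(x)+u(x)^p|\nabla u(x)|^q\le 0$ for every $x\in V$, with the conventions $0^0=1$, $0^q=0$ for $q>0$, and, for $q<0$, $|\nabla u(x)|^q=+\infty$ when $|\nabla u(x)|=0$ (so the inequality fails at such $x$). *)

theory Defs
  imports Complex_Main
begin

definition adj :: "('a \<Rightarrow> 'a \<Rightarrow> real) \<Rightarrow> 'a \<Rightarrow> 'a \<Rightarrow> bool" where
  "adj mu x y \<longleftrightarrow> mu x y > 0"

definition weighted_graph :: "('a \<Rightarrow> 'a \<Rightarrow> real) \<Rightarrow> bool" where
  "weighted_graph mu \<longleftrightarrow>
     infinite (UNIV :: 'a set) \<and>
     (\<forall>x y. mu x y = mu y x) \<and>
     (\<forall>x y. mu x y \<ge> 0) \<and>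
     (\<forall>x. \<not> adj mu x x) \<and>
     (\<forall>x. finite {y. adj mu x y}) \<and>
     (\<forall>x y. (adj mu)\<^sup>*\<^sup>* x y)"

definition vmeasure :: "('a \<Rightarrow> 'a \<Rightarrow> real) \<Rightarrow> 'a \<Rightarrow> real" where
  "vmeasure mu x = (\<Sum>y\<in>{y. adj mu x y}. mu x y)"

definition cond_p0 :: "('a \<Rightarrow> 'a \<Rightarrow> real) \<Rightarrow> bool" where
  "cond_p0 mu \<longleftrightarrow> (\<exists>p0>1. \<forall>x y. adj mu x y \<longrightarrow> mu x y / vmeasure mu x \<ge> 1 / p0)"

definition mlap :: "real \<Rightarrow> ('a \<Rightarrow> 'a \<Rightarrow> real) \<Rightarrow> ('a \<Rightarrow> real) \<Rightarrow> 'a \<Rightarrow> real" where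
  "mlap m mu u x = (1 / vmeasure mu x) *
     (\<Sum>y\<in>{y. adj mu x y}. mu x y * \<bar>u y - u x\<bar> powr (m - 2) * (u y - u x))"

definition grad_norm :: "('a \<Rightarrow> 'a \<Rightarrow> real) \<Rightarrow> ('a \<Rightarrow> real) \<Rightarrow> 'a \<Rightarrow> real" where
  "grad_norm mu u x = sqrt (\<Sum>y\<in>{y. adj mu x y}. mu x y / (2 * vmeasure mu x) * (u y - u x)\<^sup>2)"

definition gdist :: "('a \<Rightarrow> 'a \<Rightarrow> real) \<Rightarrow> 'a \<Rightarrow> 'a \<Rightarrow> nat" where
  "gdist mu x y = (LEAST n. (adj mu ^^ n) x y)"

definition Wo :: "('a \<Rightarrow> 'a \<Rightarrow> real) \<Rightarrow> 'a \<Rightarrow> nat \<Rightarrow> real" where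
  "Wo mu o' n = (\<Sum>(x, y) \<in> {(x, y). gdist mu o' x \<le> n \<and> gdist mu o' x < gdist mu o' y \<and> adj mu x y}.
                   mu x y)"

text \<open>Conventions: 0^0 = 1, 0^q = 0 for q > 0, and for q < 0 the inequality
  fails where the gradient vanishes.\<close>
definition nontriv_pos_solution ::
  "real \<Rightarrow> real \<Rightarrow> real \<Rightarrow> ('a \<Rightarrow> 'a \<Rightarrow> real) \<Rightarrow> ('a \<Rightarrow> real) \<Rightarrow> bool" where
  "nontriv_pos_solution m p q mu u \<longleftrightarrow>
     (\<forall>x. u x > 0) \<and> (\<exists>x y. u x \<noteq> u y) \<and>
     (\<forall>x. (q < 0 \<longrightarrow> grad_norm mu u x \<noteq> 0) \<and>
          mlap m mu u x + u x powr p * (if q = 0 then 1 else grad_norm mu u x powr q) \<le> 0)"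

end

theory Submission
  imports Defs "HOL-Analysis.Harmonic_Numbers"
begin


lemma holder_sum:
  fixes x y :: "'b \<Rightarrow> real"
  assumes "finite K" "\<forall>i\<in>K. x i \<ge> 0" "\<forall>i\<in>K. y i \<ge> 0" "0 < r" "r < 1"
  shows "(\<Sum>i\<in>K. x i powr r * y i powr (1-r)) \<le> (\<Sum>i\<in>K. x i) powr r * (\<Sum>i\<in>K. y i) powr (1-r)"
proof -
  define X where "X = (\<Sum>i\<in>K. x i)"
  define Y where "Y = (\<Sum>i\<in>K. y i)"
  have X0: "X \<ge> 0" "Y \<ge> 0" using assms unfolding X_def Y_def by (auto intro: sum_nonneg)
  show ?thesis
  proof (cases "X = 0 \<or> Y = 0")
    case True
    then have "\<forall>i\<in>K. x i powr r * y i powr (1-r) = 0"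
      using assms unfolding X_def Y_def by (auto simp: sum_nonneg_eq_0_iff)
    then have "(\<Sum>i\<in>K. x i powr r * y i powr (1-r)) = 0" by (intro sum.neutral) auto
    then show ?thesis using X0 by (simp add: X_def[symmetric] Y_def[symmetric])
  next
    case False
    then have XY: "X > 0" "Y > 0" using X0 by auto
    have pt: "x i powr r * y i powr (1-r) \<le> X powr r * Y powr (1-r) * (r * (x i / X) + (1-r) * (y i / Y))"
      if i: "i \<in> K" for i
    proof (cases "x i = 0 \<or> y i = 0")
      case True
      have "0 \<le> X powr r * Y powr (1-r) * (r * (x i / X) + (1-r) * (y i / Y))"
        using XY assms i by (intro mult_nonneg_nonneg add_nonneg_nonneg) auto
      then show ?thesis using True by auto
    next
      case False
      then have pos: "x i / X > 0" "y i / Y > 0" using assms i XY by (auto simp: less_le)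
      have "(x i / X) powr r * (y i / Y) powr (1-r) \<le> r * (x i / X) + (1-r) * (y i / Y)"
        using Youngs_inequality_0[OF _ _ _ pos, of r "1-r"] assms by auto
      moreover have "x i powr r * y i powr (1-r) = X powr r * Y powr (1-r) * ((x i / X) powr r * (y i / Y) powr (1-r))"
        using XY assms i by (simp add: powr_divide)
      ultimately show ?thesis using XY by (simp add: mult_left_mono)
    qed
    have "(\<Sum>i\<in>K. x i powr r * y i powr (1-r)) \<le> (\<Sum>i\<in>K. X powr r * Y powr (1-r) * (r * (x i / X) + (1-r) * (y i / Y)))"
      by (rule sum_mono) (use pt in auto)
    also have "\<dots> = X powr r * Y powr (1-r) * (r * (\<Sum>i\<in>K. x i) / X + (1-r) * (\<Sum>i\<in>K. y i) / Y)"
      by (simp add: sum_distrib_left sum.distrib sum_divide_distrib[symmetric] algebra_simps)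
    also have "\<dots> = X powr r * Y powr (1-r)"
      using XY by (simp add: X_def[symmetric] Y_def[symmetric])
    finally show ?thesis by (simp add: X_def Y_def)
  qed
qed

lemma powr_diff_bound:
  fixes x y s :: real
  assumes "0 < x" "x \<le> y" "s > 1"
  shows "(y - x) / y powr s \<le> (x powr (1-s) - y powr (1-s)) / (s - 1)"
proof (cases "x = y")
  case True then show ?thesis by simp
next
  case False
  then have xy: "x < y" using assms by auto
  have der: "\<And>t. x \<le> t \<Longrightarrow> t \<le> y \<Longrightarrow> ((\<lambda>t. t powr (1-s)) has_real_derivative (1-s) * t powr (1-s-1)) (at t)"
    using assms by (intro has_real_derivative_powr) auto
  obtain z where z: "x < z" "z < y" "y powr (1-s) - x powr (1-s) = (y - x) * ((1-s) * z powr (1-s-1))"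
    using MVT2[OF xy der] by blast
  have zp: "z > 0" using z assms by auto
  have "z powr (1-s-1) = z powr (-s)" by simp
  have "y powr (-s) \<le> z powr (-s)" using powr_mono2'[of "-s" z y] z zp assms by auto
  have "(y - x) / y powr s = (y - x) * y powr (-s)" by (simp add: powr_minus divide_inverse)
  also have "\<dots> \<le> (y - x) * z powr (-s)"
    using \<open>y powr (-s) \<le> z powr (-s)\<close> xy by (intro mult_left_mono) auto
  also have "\<dots> = (x powr (1-s) - y powr (1-s)) / (s - 1)"
    using z(3) assms by (simp add: field_simps)
  finally show ?thesis .
qed



lemma harm_diff:
  "k0 \<le> K \<Longrightarrow> (\<Sum>k=k0..K. inverse (real k + 1)) = harm (Suc K) - harm k0"
proof (induction K rule: dec_induct)
  case base
  then show ?case by (simp add: harm_Suc)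
next
  case (step K)
  then show ?case by (simp add: harm_Suc add.commute)
qed

lemma analysis_core:
  fixes D w :: "nat \<Rightarrow> real" and c C r :: real and n0 n1 :: nat
  assumes D0: "\<forall>n. D n \<ge> 0" and w0: "\<forall>n. w n \<ge> 0"
    and r: "0 < r" "r < 1" and c: "c > 0" and C: "C > 0"
    and Fpos: "(\<Sum>k\<le>n0. D k) > 0"
    and key: "\<forall>n. (\<Sum>k\<le>n. D k) \<le> c * D n powr r * w n powr (1-r)"
    and W: "\<forall>n\<ge>n1. (\<Sum>k\<le>n. w k) \<le> C * real n powr (1/(1-r)) * ln (real n) powr (r/(1-r))"
  shows False
proof -
  define F where "F n = (\<Sum>k\<le>n. D k)" for n
  define s where "s = 1 / r"
  have s1: "s > 1" using r by (simp add: s_def)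
  have Fmono: "F m \<le> F n" if "m \<le> n" for m n
    unfolding F_def using that D0 by (intro sum_mono2) auto
  have Fp: "F n > 0" if "n \<ge> n0" for n
    using Fmono[OF that] Fpos by (simp add: F_def)
  define G where "G n = F n powr (1-s)" for n
  define a where "a n = D n / F n powr s" for n
  have G0: "G n \<ge> 0" for n by (simp add: G_def)
  have a0: "a n \<ge> 0" for n using D0 by (simp add: a_def)
  have FSuc: "F (Suc n) = F n + D (Suc n)" for n by (simp add: F_def)
  have stepa: "a (Suc n) \<le> (G n - G (Suc n)) / (s - 1)" if "n \<ge> n0" for n
  proof -
    have "a (Suc n) = (F (Suc n) - F n) / F (Suc n) powr s" by (simp add: a_def FSuc)
    also have "\<dots> \<le> (G n - G (Suc n)) / (s - 1)"
      unfolding G_def using powr_diff_bound[OF Fp[OF that] Fmono[of n "Suc n"] s1] by simp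
    finally show ?thesis .
  qed
  have tele: "(\<Sum>n\<in>{L<..M}. a n) \<le> (G L - G M) / (s - 1)" if "n0 \<le> L" "L \<le> M" for L M
    using that(2)
  proof (induction M rule: dec_induct)
    case base
    then show ?case by simp
  next
    case (step M)
    have "{L<..Suc M} = insert (Suc M) {L<..M}" using step by auto
    then have "(\<Sum>n\<in>{L<..Suc M}. a n) = a (Suc M) + (\<Sum>n\<in>{L<..M}. a n)" by simp
    also have "\<dots> \<le> (G M - G (Suc M)) / (s - 1) + (G L - G M) / (s - 1)"
      using stepa[of M] step that by (intro add_mono) auto
    also have "\<dots> = (G L - G (Suc M)) / (s - 1)" by (simp add: diff_divide_distrib)
    finally show ?case .
  qed
  define \<kappa> where "\<kappa> = (1 / (2 * c * C powr (1-r))) powr (1/r)"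
  have kpos: "\<kappa> > 0" using c C by (simp add: \<kappa>_def)
  have block: "\<kappa> / ln (real (2*N)) \<le> (\<Sum>n\<in>{N<..2*N}. a n)"
    if N: "N \<ge> n0" "2*N \<ge> n1" "N \<ge> 1" for N
  proof -
    define A where "A = (\<Sum>n\<in>{N<..2*N}. a n)"
    define Wb where "Wb = C * real (2*N) powr (1/(1-r)) * ln (real (2*N)) powr (r/(1-r))"
    have ln2N: "ln (real (2*N)) > 0" using N by simp
    have A0: "A \<ge> 0" unfolding A_def using a0 by (intro sum_nonneg) auto
    have pt: "1 / c \<le> a n powr r * w n powr (1-r)" if n: "n \<in> {N<..2*N}" for n
    proof -
      have Fn: "F n > 0" using n N Fp by auto
      have "a n powr r = D n powr r / F n"
        unfolding a_def using Fn D0 r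
        by (simp add: powr_divide powr_powr s_def)
      then have e: "a n powr r * w n powr (1-r) = (D n powr r * w n powr (1-r)) / F n" by simp
      have "F n \<le> c * (D n powr r * w n powr (1-r))" using key by (simp add: F_def mult.assoc)
      then have "F n / c \<le> D n powr r * w n powr (1-r)" using c by (simp add: pos_divide_le_eq mult.commute)
      then have "1 / c * F n \<le> D n powr r * w n powr (1-r)" by simp
      then have "1 / c \<le> (D n powr r * w n powr (1-r)) / F n" using Fn by (simp add: pos_le_divide_eq)
      then show ?thesis using e by simp
    qed
    have "real N / c = (\<Sum>n\<in>{N<..2*N}. 1 / c)" by simp
    also have "\<dots> \<le> (\<Sum>n\<in>{N<..2*N}. a n powr r * w n powr (1-r))"
      by (rule sum_mono) (use pt in auto)
    also have "\<dots> \<le> A powr r * (\<Sum>n\<in>{N<..2*N}. w n) powr (1-r)"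
      unfolding A_def by (rule holder_sum) (use a0 w0 r in auto)
    also have "\<dots> \<le> A powr r * Wb powr (1-r)"
    proof -
      have "(\<Sum>n\<in>{N<..2*N}. w n) \<le> (\<Sum>n\<le>2*N. w n)"
        using w0 by (intro sum_mono2) auto
      also have "\<dots> \<le> Wb" unfolding Wb_def by (rule W[rule_format, OF N(2)])
      finally have "(\<Sum>n\<in>{N<..2*N}. w n) \<le> Wb" .
      moreover have "(\<Sum>n\<in>{N<..2*N}. w n) \<ge> 0" using w0 by (intro sum_nonneg) auto
      ultimately show ?thesis using r by (intro mult_left_mono powr_mono2) auto
    qed
    also have "Wb powr (1-r) = C powr (1-r) * real (2*N) * ln (real (2*N)) powr r"
      using C N r ln2N unfolding Wb_def
      by (simp add: powr_mult powr_powr)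
    finally have ineq: "real N / c \<le> A powr r * (C powr (1-r) * real (2*N) * ln (real (2*N)) powr r)" .
    have "1 / (2 * c * C powr (1-r) * ln (real (2*N)) powr r) \<le> A powr r"
    proof -
      have pos: "2 * c * C powr (1-r) * ln (real (2*N)) powr r > 0" using c C ln2N by simp
      have "real N / c = real N * (1 / c)" by simp
      from ineq have h: "real N * (1/c) \<le> real N * (A powr r * (2 * C powr (1-r) * ln (real (2*N)) powr r))"
        by (simp add: algebra_simps)
      have Np: "real N > 0" using N by simp
      have "1/c \<le> A powr r * (2 * C powr (1-r) * ln (real (2*N)) powr r)"
        by (rule mult_left_le_imp_le[OF h Np])
      then show ?thesis using pos c by (simp add: field_simps)
    qed
    then have "(1 / (2 * c * C powr (1-r) * ln (real (2*N)) powr r)) powr (1/r) \<le> (A powr r) powr (1/r)"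
      using r c C ln2N by (intro powr_mono2) auto
    moreover have "(A powr r) powr (1/r) = A" using A0 r by (simp add: powr_powr)
    moreover have "(1 / (2 * c * C powr (1-r) * ln (real (2*N)) powr r)) powr (1/r) = \<kappa> / ln (real (2*N))"
      using r c C ln2N unfolding \<kappa>_def
      by (simp add: powr_divide powr_mult powr_powr)
    ultimately show ?thesis by (simp add: A_def)
  qed
  obtain k0 where k0: "2^k0 \<ge> max n0 n1" "k0 \<ge> 1"
  proof -
    have "max n0 n1 + 1 < (2::nat) ^ (max n0 n1 + 1)" by (rule less_exp)
    then have "max n0 n1 \<le> (2::nat) ^ (max n0 n1 + 1)" by linarith
    moreover have "(1::nat) \<le> max n0 n1 + 1" by simp
    ultimately show ?thesis by (rule that)
  qed
  have dy: "(\<Sum>k=k0..K. \<kappa> / ln 2 * inverse (real k + 1)) \<le> (G (2^k0) - G (2^Suc K)) / (s - 1)"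
    if "k0 \<le> K" for K
    using that
  proof (induction K rule: dec_induct)
    case base
    have b: "\<kappa> / ln (real (2*2^k0)) \<le> (\<Sum>n\<in>{2^k0<..2*2^k0}. a n)"
      using block[of "2^k0"] k0 by auto
    have "real (2*2^k0) = (2::real)^(Suc k0)" by simp
    then have "ln (real (2*2^k0)) = (real k0 + 1) * ln 2"
      using ln_realpow[of "2::real" "Suc k0"] by simp
    with b tele[of "2^k0" "2*2^k0"] k0 show ?case
      by (simp add: field_simps)
  next
    case (step K)
    have pm: "2^k0 \<le> (2::nat)^Suc K" by (rule power_increasing) (use step in auto)
    have b: "\<kappa> / ln (real (2*2^Suc K)) \<le> (\<Sum>n\<in>{2^Suc K<..2*2^Suc K}. a n)"
      using block[of "2^Suc K"] k0 pm by simp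
    have "real (2*2^Suc K) = (2::real)^(Suc (Suc K))" by simp
    then have "ln (real (2*2^Suc K)) = (real (Suc K) + 1) * ln 2"
      using ln_realpow[of "2::real" "Suc (Suc K)"] by simp
    with b have b': "\<kappa> / ln 2 * inverse (real (Suc K) + 1) \<le> (\<Sum>n\<in>{2^Suc K<..2*2^Suc K}. a n)"
      by (simp add: field_simps)
    have t: "(\<Sum>n\<in>{2^Suc K<..2*2^Suc K}. a n) \<le> (G (2^Suc K) - G (2^Suc (Suc K))) / (s - 1)"
      using tele[of "2^Suc K" "2*2^Suc K"] k0 pm by simp
    have "(\<Sum>k=k0..Suc K. \<kappa> / ln 2 * inverse (real k + 1)) = (\<Sum>k=k0..K. \<kappa> / ln 2 * inverse (real k + 1)) + \<kappa> / ln 2 * inverse (real (Suc K) + 1)"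
      using step by simp
    also have "\<dots> \<le> (G (2^k0) - G (2^Suc K)) / (s - 1) + (G (2^Suc K) - G (2^Suc (Suc K))) / (s - 1)"
      using step.IH b' t by linarith
    also have "\<dots> = (G (2^k0) - G (2^Suc (Suc K))) / (s - 1)" by (simp add: diff_divide_distrib)
    finally show ?case .
  qed
  define Bd where "Bd = G (2^k0) / (s - 1) / (\<kappa> / ln 2)"
  have kl: "\<kappa> / ln 2 > 0" using kpos by simp
  have hb: "harm (Suc K) - harm k0 \<le> Bd" if "k0 \<le> K" for K
  proof -
    have "(\<Sum>k=k0..K. \<kappa> / ln 2 * inverse (real k + 1)) \<le> G (2^k0) / (s - 1)"
      using dy[OF that] G0[of "2^Suc K"] s1 by (smt (verit) divide_right_mono)
    moreover have "(\<Sum>k=k0..K. \<kappa> / ln 2 * inverse (real k + 1)) = \<kappa> / ln 2 * (harm (Suc K) - harm k0)"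
      by (simp only: sum_distrib_left[symmetric] harm_diff[OF that])
    ultimately have "\<kappa> / ln 2 * (harm (Suc K) - harm k0) \<le> G (2^k0) / (s - 1)" by simp
    then show ?thesis unfolding Bd_def by (subst pos_le_divide_eq[OF kl]) (simp add: mult.commute)
  qed
  have "eventually (\<lambda>n. harm n > Bd + harm k0) sequentially"
    using harm_at_top filterlim_at_top_dense by blast
  then obtain N0 where N0: "\<forall>n\<ge>N0. harm n > Bd + harm k0" by (auto simp: eventually_sequentially)
  have "harm (Suc (max N0 k0)) > Bd + harm k0" using N0 by simp
  moreover have "harm (Suc (max N0 k0)) - harm k0 \<le> Bd" using hb by simp
  ultimately show False by simp
qed



lemma wg_sym: "weighted_graph mu \<Longrightarrow> mu x y = mu y x"
  unfolding weighted_graph_def by blast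

lemma wg_nonneg: "weighted_graph mu \<Longrightarrow> mu x y \<ge> 0"
  unfolding weighted_graph_def by blast

lemma wg_adj_sym: "weighted_graph mu \<Longrightarrow> adj mu x y \<Longrightarrow> adj mu y x"
  unfolding adj_def by (simp add: wg_sym)

lemma wg_fin: "weighted_graph mu \<Longrightarrow> finite {y. adj mu x y}"
  unfolding weighted_graph_def by blast

lemma wg_conn: "weighted_graph mu \<Longrightarrow> (adj mu)\<^sup>*\<^sup>* x y"
  unfolding weighted_graph_def by blast

lemma gdist_path: "weighted_graph mu \<Longrightarrow> (adj mu ^^ gdist mu o' x) o' x"
proof -
  assume wg: "weighted_graph mu"
  then have "\<exists>n. (adj mu ^^ n) o' x" using wg_conn[OF wg] by (simp add: rtranclp_power)
  then show ?thesis unfolding gdist_def by (rule LeastI_ex)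
qed

lemma gdist_le: "(adj mu ^^ n) o' x \<Longrightarrow> gdist mu o' x \<le> n"
  unfolding gdist_def by (rule Least_le)

lemma gdist_adj: "weighted_graph mu \<Longrightarrow> adj mu x y \<Longrightarrow> gdist mu o' y \<le> gdist mu o' x + 1"
  using gdist_le[OF relpowp_Suc_I[OF gdist_path]] by simp

lemma ball_finite: assumes wg: "weighted_graph mu" shows "finite {x. gdist mu o' x \<le> n}"
proof (induction n)
  case 0
  have "{x. gdist mu o' x \<le> 0} \<subseteq> {o'}"
  proof
    fix x assume "x \<in> {x. gdist mu o' x \<le> 0}"
    then have "(adj mu ^^ 0) o' x" using gdist_path[OF wg, of o' x] by simp
    then show "x \<in> {o'}" by simp
  qed
  then show ?case using finite_subset by blast
next
  case (Suc n)
  have "{x. gdist mu o' x \<le> Suc n} \<subseteq> {x. gdist mu o' x \<le> n} \<union> (\<Union>x\<in>{x. gdist mu o' x \<le> n}. {y. adj mu x y})"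
  proof
    fix y assume "y \<in> {x. gdist mu o' x \<le> Suc n}"
    then have "gdist mu o' y \<le> n \<or> gdist mu o' y = Suc n" by auto
    then show "y \<in> {x. gdist mu o' x \<le> n} \<union> (\<Union>x\<in>{x. gdist mu o' x \<le> n}. {y. adj mu x y})"
    proof
      assume "gdist mu o' y = Suc n"
      then have "(adj mu ^^ Suc n) o' y" using gdist_path[OF wg, of o' y] by simp
      then obtain z where "(adj mu ^^ n) o' z" "adj mu z y" by (rule relpowp_Suc_E)
      then have "gdist mu o' z \<le> n" using gdist_le by metis
      then show ?thesis using \<open>adj mu z y\<close> by blast
    qed simp
  qed
  moreover have "finite (\<Union>x\<in>{x. gdist mu o' x \<le> n}. {y. adj mu x y})"
    using Suc wg_fin[OF wg] by (intro finite_UN_I) auto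
  ultimately show ?case using Suc finite_subset by blast
qed

lemma vmeasure_pos: assumes wg: "weighted_graph mu" shows "vmeasure mu x > 0"
proof -
  have "infinite (UNIV::'a set)" using wg unfolding weighted_graph_def by blast
  note inf = this
  have "\<exists>y. y \<noteq> x"
  proof (rule ccontr)
    assume "\<not> ?thesis"
    then have "UNIV = {x}" by auto
    then show False using inf by (metis finite.emptyI finite_insert)
  qed
  then obtain y where "y \<noteq> x" by blast
  moreover have "(adj mu)\<^sup>*\<^sup>* x y" by (rule wg_conn[OF wg])
  ultimately obtain z where z: "adj mu x z" by (auto elim: converse_rtranclpE)
  have "mu x z \<le> vmeasure mu x" unfolding vmeasure_def
    using z wg_fin[OF wg] wg_nonneg[OF wg] by (intro member_le_sum) auto
  moreover have "mu x z > 0" using z by (simp add: adj_def)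
  ultimately show ?thesis by simp
qed

lemma nonconst_edge:
  assumes wg: "weighted_graph mu" and nc: "\<exists>x y. u x \<noteq> u y"
  shows "\<exists>x y. adj mu x y \<and> u x \<noteq> (u y :: real)"
proof (rule ccontr)
  assume "\<not> ?thesis"
  then have e: "\<And>x y. adj mu x y \<Longrightarrow> u x = u y" by blast
  have c: "u x = u y" for x y
  proof -
    have "(adj mu)\<^sup>*\<^sup>* x y" by (rule wg_conn[OF wg])
    then show ?thesis by (induction rule: rtranclp_induct) (auto dest: e)
  qed
  then show False using nc by blast
qed



theorem theorem1p1:
  fixes mu :: "'a \<Rightarrow> 'a \<Rightarrow> real" and o' :: 'a
    and m p q C :: real and n1 :: nat
  assumes "weighted_graph mu" and "cond_p0 mu" and "m > 1"
    and "p < 0" and "m - 1 < q" and "q < m"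
    and "C > 0"
    and "\<forall>n\<ge>n1. Wo mu o' n \<le> C * real n powr (q / (q - m + 1)) * ln (real n) powr ((m - 1) / (q - m + 1))"
  shows "\<not> (\<exists>u. nontriv_pos_solution m p q mu u)"
proof
  assume "\<exists>u. nontriv_pos_solution m p q mu u"
  then obtain u where sol: "nontriv_pos_solution m p q mu u" by blast
  note wg = assms(1)
  obtain p0 where p0: "p0 > 1" "\<And>x y. adj mu x y \<Longrightarrow> mu x y / vmeasure mu x \<ge> 1/p0"
    using assms(2) unfolding cond_p0_def by blast
  have qpos: "q > 0" using assms by simp
  have upos: "\<And>x. u x > 0" and nc: "\<exists>x y. u x \<noteq> u y"
    and ineq: "\<And>x. mlap m mu u x + u x powr p * grad_norm mu u x powr q \<le> 0"
    using sol qpos unfolding nontriv_pos_solution_def by auto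
  define d where "d = gdist mu o'"
  define V where "V = vmeasure mu"
  define grad where "grad = grad_norm mu u"
  define r where "r = (m-1)/q"
  define a where "a = -(m-1)*p/(q-m+1)"
  define h where "h x = u x powr (-a)" for x
  define f where "f x = u x powr p * grad x powr q * h x" for x
  define g where "g x y = \<bar>u y - u x\<bar> powr (m-2) * (u y - u x)" for x y
  define t where "t x y = mu x y * g x y * h x" for x y
  define N where "N x = {y. adj mu x y}" for x
  define wv where "wv x = (\<Sum>y\<in>{y. adj mu x y \<and> d x < d y}. mu x y)" for x
  define B where "B n = {x. d x \<le> n}" for n
  define S where "S n = {x. d x = n}" for n
  define D where "D n = (\<Sum>x\<in>S n. V x * f x)" for n
  define w where "w n = (\<Sum>x\<in>S n. wv x)" for n
  define cst where "cst = (2*p0) powr ((m-1)/2)"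
  have qm: "q - m + 1 > 0" using assms by simp
  have r01: "0 < r" "r < 1" using assms qpos unfolding r_def by (auto simp: field_simps)
  have apos: "a > 0"
  proof -
    have "(1-m)*p > 0" using assms by (intro mult_neg_neg) auto
    then have "(1-m)*p/(q-m+1) > 0" using qm by (rule divide_pos_pos)
    then show ?thesis unfolding a_def by simp
  qed
  have Vpos: "\<And>x. V x > 0" unfolding V_def by (rule vmeasure_pos[OF wg])
  have mu0: "\<And>x y. mu x y \<ge> 0" by (rule wg_nonneg[OF wg])
  have Nfin: "\<And>x. finite (N x)" unfolding N_def by (rule wg_fin[OF wg])
  have Bfin: "\<And>n. finite (B n)" unfolding B_def d_def by (rule ball_finite[OF wg])
  have Sfin: "finite (S n)" for n
  proof -
    have "S n \<subseteq> B n" unfolding S_def B_def by auto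
    then show ?thesis using Bfin[of n] by (rule finite_subset)
  qed
  have hpos: "h x > 0" for x unfolding h_def using upos[of x] by simp
  define T where "T x = (\<Sum>y\<in>N x. mu x y / (2 * V x) * (u y - u x)\<^sup>2)" for x
  have Tt0: "0 \<le> mu x y / (2 * V x) * (u y - u x)\<^sup>2" for x y
      using mu0[of x y] Vpos[of x] by (intro mult_nonneg_nonneg divide_nonneg_pos) auto
  have T0: "T x \<ge> 0" for x unfolding T_def
    by (rule sum_nonneg) (rule Tt0)
  have gradT: "grad x = sqrt (T x)" for x unfolding grad_def grad_norm_def T_def N_def V_def by simp
  have grad0: "grad x \<ge> 0" for x using gradT T0 by simp
  have f0: "f x \<ge> 0" for x unfolding f_def using hpos[of x] by (intro mult_nonneg_nonneg) auto
  have cpos: "cst > 0" unfolding cst_def using p0 by simp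
  have Dub: "\<bar>u y - u x\<bar> \<le> sqrt (2*p0) * grad x" if xy: "adj mu x y" for x y
  proof -
    have "mu x y / (2 * V x) * (u y - u x)\<^sup>2 \<le> T x"
      unfolding T_def using xy Nfin by (intro member_le_sum Tt0) (auto simp: N_def)
    moreover have "1 / (2*p0) \<le> mu x y / (2 * V x)"
      using p0(2)[OF xy] p0(1) by (simp add: V_def field_simps)
    ultimately have "1 / (2*p0) * (u y - u x)\<^sup>2 \<le> T x"
      by (smt (verit) mult_right_mono zero_le_power2)
    then have "(u y - u x)\<^sup>2 \<le> 2*p0 * T x" using p0(1) by (simp add: field_simps)
    also have "\<dots> = (sqrt (2*p0) * grad x)\<^sup>2" using p0(1) T0 by (simp add: gradT power_mult_distrib)
    finally have "\<bar>u y - u x\<bar>\<^sup>2 \<le> (sqrt (2*p0) * grad x)\<^sup>2" by simp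
    then show ?thesis by (rule power2_le_imp_le) (use grad0 p0 in simp)
  qed
  have fr: "f x powr r = grad x powr (m-1) * h x" for x
  proof -
    have e1: "q * r = m - 1" unfolding r_def using qpos by simp
    have qm0: "q - m + 1 \<noteq> 0" using qm by simp
    have pa: "p - a = p*q/(q-m+1)" unfolding a_def using qm0 by (simp add: field_simps)
    have "p * r - a * r = r * (p - a)" by (simp add: algebra_simps)
    also have "\<dots> = (m-1)/q * (p*q/(q-m+1))" unfolding r_def pa ..
    also have "\<dots> = (m-1)*p/(q-m+1)"
    proof -
      have "q \<noteq> 0" using qpos by simp
      then show ?thesis by (simp add: divide_simps)
    qed
    also have "\<dots> = -a" unfolding a_def by (simp only: minus_divide_left mult_minus_left minus_minus)
    finally have e2: "p * r - a * r = -a" .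
    have "f x powr r = (u x powr p) powr r * (grad x powr q) powr r * (u x powr (-a)) powr r"
      unfolding f_def h_def using upos grad0 by (simp add: powr_mult)
    also have "\<dots> = u x powr (p*r) * grad x powr (m-1) * u x powr (-a*r)"
      by (simp add: powr_powr e1 mult.commute)
    also have "\<dots> = grad x powr (m-1) * u x powr (p*r + (-a*r))"
      by (simp only: powr_add mult_ac)
    also have "p*r + (-a*r) = -a" using e2 by simp
    finally show ?thesis unfolding h_def by simp
  qed
  have ptb: "- g x y * h x \<le> cst * f x powr r" if xy: "adj mu x y" for x y
  proof -
    have "- g x y \<le> \<bar>u y - u x\<bar> powr (m-1)"
    proof (cases "u y = u x")
      case True then show ?thesis by (simp add: g_def)
    next
      case False
      then have "\<bar>u y - u x\<bar> > 0" by simp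
      then have "\<bar>u y - u x\<bar> powr (m-1) = \<bar>u y - u x\<bar> powr (m-2) * \<bar>u y - u x\<bar>"
        using powr_add[of "\<bar>u y - u x\<bar>" "m-2" 1] by simp
      moreover have "\<bar>u y - u x\<bar> powr (m-2) * (- (u y - u x)) \<le> \<bar>u y - u x\<bar> powr (m-2) * \<bar>u y - u x\<bar>"
        by (intro mult_left_mono) auto
      ultimately show ?thesis unfolding g_def by (simp add: algebra_simps)
    qed
    also have "\<dots> \<le> (sqrt (2*p0) * grad x) powr (m-1)"
      using Dub[OF xy] assms(3) by (intro powr_mono2) auto
    also have "\<dots> = cst * grad x powr (m-1)"
      unfolding cst_def using p0(1) grad0
      by (simp add: powr_mult powr_half_sqrt[symmetric] powr_powr)
    finally have "- g x y * h x \<le> cst * grad x powr (m-1) * h x"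
      using mult_right_mono[of "- g x y" "cst * grad x powr (m-1)" "h x"] hpos[of x] by simp
    then show ?thesis by (simp add: fr)
  qed
  have pv: "V x * f x \<le> - (\<Sum>y\<in>N x. t x y)" for x
  proof -
    have ml: "(\<Sum>y\<in>N x. mu x y * g x y) = V x * mlap m mu u x"
      unfolding mlap_def V_def N_def g_def using Vpos[of x]
      by (simp add: V_def mult.assoc)
    have "u x powr p * grad x powr q \<le> - mlap m mu u x" using ineq[of x] by (simp add: grad_def)
    then have "V x * (u x powr p * grad x powr q) * h x \<le> V x * (- mlap m mu u x) * h x"
      using Vpos[of x] hpos[of x] by (intro mult_right_mono mult_left_mono) auto
    also have "\<dots> = - (\<Sum>y\<in>N x. t x y)"
      unfolding t_def using ml by (simp add: sum_distrib_right[symmetric])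
    finally show ?thesis by (simp add: f_def mult.assoc)
  qed
  have Ipos: "(\<Sum>x\<in>B n. \<Sum>y\<in>{y\<in>B n. adj mu x y}. t x y) \<ge> 0" for n
  proof -
    define I where "I = (\<Sum>x\<in>B n. \<Sum>y\<in>{y\<in>B n. adj mu x y}. t x y)"
    define I2 where "I2 = (\<Sum>x\<in>B n. \<Sum>y\<in>{y\<in>B n. adj mu x y}. - (mu x y * g x y * h y))"
    have "I = (\<Sum>y\<in>B n. \<Sum>x\<in>{x\<in>B n. adj mu x y}. t x y)"
      unfolding I_def by (rule sum.swap_restrict[OF Bfin Bfin])
    also have "\<dots> = I2"
      unfolding I2_def
    proof (rule sum.cong[OF refl])
      fix y assume "y \<in> B n"
      have "{x\<in>B n. adj mu x y} = {x\<in>B n. adj mu y x}" using wg_adj_sym[OF wg] by blast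
      moreover have "t x y = - (mu y x * g y x * h x)" for x
        unfolding t_def g_def using wg_sym[OF wg, of x y] by (simp add: abs_minus_commute algebra_simps)
      ultimately show "(\<Sum>x\<in>{x\<in>B n. adj mu x y}. t x y) = (\<Sum>x\<in>{x\<in>B n. adj mu y x}. - (mu y x * g y x * h x))"
        by simp
    qed
    finally have "I = I2" .
    moreover have "I + I2 \<ge> 0"
    proof -
      have eq: "I + I2 = (\<Sum>x\<in>B n. \<Sum>y\<in>{y\<in>B n. adj mu x y}. mu x y * (g x y * (h x - h y)))"
        unfolding I_def I2_def t_def by (simp add: sum.distrib[symmetric] algebra_simps)
      have "(\<Sum>x\<in>B n. \<Sum>y\<in>{y\<in>B n. adj mu x y}. mu x y * (g x y * (h x - h y))) \<ge> 0"
      proof (rule sum_nonneg, rule sum_nonneg, rule mult_nonneg_nonneg[OF mu0])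
        fix x y
        show "0 \<le> g x y * (h x - h y)"
        proof (cases "u x \<le> u y")
          case True
          have "h y \<le> h x" unfolding h_def using powr_mono2'[of "-a" "u x" "u y"] apos upos True by simp
          moreover have "g x y \<ge> 0" unfolding g_def using True by simp
          ultimately show ?thesis by simp
        next
          case False
          have "h x \<le> h y" unfolding h_def using powr_mono2'[of "-a" "u y" "u x"] apos upos False by simp
          moreover have "g x y \<le> 0" unfolding g_def using False by (simp add: mult_nonneg_nonpos)
          ultimately show ?thesis by (simp add: mult_nonpos_nonpos)
        qed
      qed
      then show ?thesis using eq by simp
    qed
    ultimately show ?thesis unfolding I_def by simp
  qed
  have ext: "(\<Sum>y\<in>N x - B n. - t x y) \<le> (if d x = n then cst * wv x * f x powr r else 0)"
    if x: "x \<in> B n" for x n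
  proof (cases "d x = n")
    case False
    have "N x - B n = {}"
    proof -
      have "d y \<le> n" if "adj mu x y" for y
        using gdist_adj[OF wg that, of o'] x False unfolding d_def B_def by simp
      then show ?thesis unfolding N_def B_def by auto
    qed
    then have "(\<Sum>y\<in>N x - B n. - t x y) = 0" by (simp only: sum.empty)
    then show ?thesis using False by simp
  next
    case True
    have sub: "N x - B n \<subseteq> {y. adj mu x y \<and> d x < d y}" using True unfolding N_def B_def by auto
    have "(\<Sum>y\<in>N x - B n. - t x y) \<le> (\<Sum>y\<in>N x - B n. mu x y * (cst * f x powr r))"
    proof (rule sum_mono)
      fix y assume "y \<in> N x - B n"
      then have "adj mu x y" unfolding N_def by simp
      then have "- g x y * h x \<le> cst * f x powr r" by (rule ptb)
      then have "mu x y * (- g x y * h x) \<le> mu x y * (cst * f x powr r)" by (intro mult_left_mono mu0)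
      then show "- t x y \<le> mu x y * (cst * f x powr r)" unfolding t_def by (simp add: algebra_simps)
    qed
    also have "\<dots> \<le> (\<Sum>y\<in>{y. adj mu x y \<and> d x < d y}. mu x y * (cst * f x powr r))"
      using sub Nfin[of x] cpos mu0 unfolding N_def
      by (intro sum_mono2) (auto intro!: mult_nonneg_nonneg)
    also have "\<dots> = cst * wv x * f x powr r" unfolding wv_def
      by (simp only: sum_distrib_right[symmetric]) (simp only: mult_ac)
    finally show ?thesis using True by simp
  qed
  have comb: "(\<Sum>x\<in>B n. V x * f x) \<le> (\<Sum>x\<in>S n. cst * wv x * f x powr r)" for n
  proof -
    have split: "(\<Sum>y\<in>N x. t x y) = (\<Sum>y\<in>{y\<in>B n. adj mu x y}. t x y) + (\<Sum>y\<in>N x - B n. t x y)" for x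
    proof -
      have "N x \<inter> B n = {y\<in>B n. adj mu x y}" unfolding N_def by auto
      then show ?thesis using sum.Int_Diff[OF Nfin[of x], of "t x" "B n"] by simp
    qed
    have "(\<Sum>x\<in>B n. V x * f x) \<le> (\<Sum>x\<in>B n. - (\<Sum>y\<in>N x. t x y))" by (rule sum_mono) (rule pv)
    also have "\<dots> = - (\<Sum>x\<in>B n. \<Sum>y\<in>{y\<in>B n. adj mu x y}. t x y) + (\<Sum>x\<in>B n. \<Sum>y\<in>N x - B n. - t x y)"
      by (simp add: split sum.distrib sum_negf sum_subtractf)
    also have "\<dots> \<le> (\<Sum>x\<in>B n. \<Sum>y\<in>N x - B n. - t x y)" using Ipos[of n] by simp
    also have "\<dots> \<le> (\<Sum>x\<in>B n. if d x = n then cst * wv x * f x powr r else 0)"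
      by (rule sum_mono) (rule ext)
    also have "\<dots> = (\<Sum>x\<in>{x\<in>B n. d x = n}. cst * wv x * f x powr r)"
      by (rule sum.inter_filter[OF Bfin, symmetric])
    also have "{x\<in>B n. d x = n} = S n" unfolding B_def S_def by auto
    finally show ?thesis .
  qed
  have wvV: "wv x \<le> V x" for x
    unfolding wv_def V_def vmeasure_def using wg_fin[OF wg] mu0 by (intro sum_mono2) auto
  have wv0: "wv x \<ge> 0" for x unfolding wv_def using mu0 by (intro sum_nonneg) auto
  have hold: "(\<Sum>x\<in>S n. cst * wv x * f x powr r) \<le> cst * D n powr r * w n powr (1-r)" for n
  proof -
    have e: "wv x * f x powr r = (wv x * f x) powr r * wv x powr (1-r)" for x
    proof (cases "wv x = 0")
      case True then show ?thesis by simp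
    next
      case False
      then have "wv x > 0" using wv0[of x] by simp
      then show ?thesis using f0[of x]
        by (simp add: powr_mult mult.assoc mult.commute mult.left_commute powr_add[symmetric])
    qed
    have "(\<Sum>x\<in>S n. wv x * f x powr r) = (\<Sum>x\<in>S n. (wv x * f x) powr r * wv x powr (1-r))"
      using e by simp
    also have "\<dots> \<le> (\<Sum>x\<in>S n. wv x * f x) powr r * (\<Sum>x\<in>S n. wv x) powr (1-r)"
      by (rule holder_sum) (use Sfin wv0 f0 r01 in auto)
    also have "\<dots> \<le> D n powr r * w n powr (1-r)"
    proof -
      have "(\<Sum>x\<in>S n. wv x * f x) \<le> D n" unfolding D_def
        using wvV f0 by (intro sum_mono mult_right_mono) auto
      moreover have "0 \<le> (\<Sum>x\<in>S n. wv x * f x)" using wv0 f0 by (intro sum_nonneg) auto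
      ultimately show ?thesis unfolding w_def using r01 by (intro mult_right_mono powr_mono2) auto
    qed
    finally show ?thesis by (simp add: sum_distrib_left[symmetric] mult.assoc cpos)
  qed
  have grp: "(\<Sum>x\<in>B n. \<phi> x) = (\<Sum>k\<le>n. \<Sum>x\<in>S k. \<phi> x)" for n and \<phi> :: "'a \<Rightarrow> real"
  proof -
    have "(\<Sum>k\<le>n. \<Sum>x\<in>{x\<in>B n. d x = k}. \<phi> x) = (\<Sum>x\<in>B n. \<phi> x)"
      by (rule sum.group[OF Bfin]) (auto simp: B_def)
    moreover have "(\<Sum>k\<le>n. \<Sum>x\<in>{x\<in>B n. d x = k}. \<phi> x) = (\<Sum>k\<le>n. \<Sum>x\<in>S k. \<phi> x)"
      by (rule sum.cong[OF refl]) (auto simp: B_def S_def intro!: sum.cong)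
    ultimately show ?thesis by simp
  qed
  have key: "\<forall>n. (\<Sum>k\<le>n. D k) \<le> cst * D n powr r * w n powr (1-r)"
  proof
    fix n
    have "(\<Sum>k\<le>n. D k) = (\<Sum>x\<in>B n. V x * f x)" unfolding D_def by (simp add: grp)
    then show "(\<Sum>k\<le>n. D k) \<le> cst * D n powr r * w n powr (1-r)" using comb[of n] hold[of n] by simp
  qed
  have Wo_eq: "Wo mu o' n = (\<Sum>k\<le>n. w k)" for n
  proof -
    have set: "{(x, y). gdist mu o' x \<le> n \<and> gdist mu o' x < gdist mu o' y \<and> adj mu x y} = Sigma (B n) (\<lambda>x. {y. adj mu x y \<and> d x < d y})"
      unfolding B_def d_def by auto
    have "Wo mu o' n = (\<Sum>(x,y)\<in>Sigma (B n) (\<lambda>x. {y. adj mu x y \<and> d x < d y}). mu x y)"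
      unfolding Wo_def set by simp
    also have "\<dots> = (\<Sum>x\<in>B n. wv x)" unfolding wv_def
      by (rule sum.Sigma[symmetric]) (use Bfin wg_fin[OF wg] in auto)
    also have "\<dots> = (\<Sum>k\<le>n. w k)" unfolding w_def by (rule grp)
    finally show ?thesis .
  qed
  have Vf0: "V x * f x \<ge> 0" for x using Vpos[of x] f0[of x] by simp
  have D0: "\<forall>n. D n \<ge> 0" unfolding D_def using Vf0 by (auto intro!: sum_nonneg)
  have w0: "\<forall>n. w n \<ge> 0" unfolding w_def using wv0 by (auto intro!: sum_nonneg)
  obtain x0 y0 where xy0: "adj mu x0 y0" "u x0 \<noteq> u y0" using nonconst_edge[OF wg nc] by blast
  have Fpos: "(\<Sum>k\<le>d x0. D k) > 0"
  proof -
    have "0 < mu x0 y0 / (2 * V x0) * (u y0 - u x0)\<^sup>2"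
      using xy0 Vpos[of x0] by (simp add: adj_def)
    also have "\<dots> \<le> T x0"
      unfolding T_def using xy0 Nfin by (intro member_le_sum Tt0) (auto simp: N_def)
    finally have "grad x0 > 0" using gradT by simp
    then have "f x0 > 0" unfolding f_def using upos[of x0] hpos[of x0] by (intro mult_pos_pos) auto
    then have "V x0 * f x0 > 0" using Vpos by simp
    also have "V x0 * f x0 \<le> (\<Sum>x\<in>B (d x0). V x * f x)"
      using Bfin Vf0 by (intro member_le_sum) (auto simp: B_def)
    also have "\<dots> = (\<Sum>k\<le>d x0. D k)" unfolding D_def by (rule grp)
    finally show ?thesis .
  qed
  have q0: "q \<noteq> 0" using qpos by simp
  have omr: "1 - r = (q - m + 1) / q"
  proof -
    have "1 - r = q / q - (m - 1) / q" unfolding r_def using q0 by simp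
    also have "\<dots> = (q - (m - 1)) / q" by (rule diff_divide_distrib[symmetric])
    finally show ?thesis by simp
  qed
  have ex1: "1 / (1 - r) = q / (q - m + 1)" unfolding omr by simp
  have ex2: "r / (1 - r) = (m - 1) / (q - m + 1)" unfolding omr unfolding r_def using q0 by simp
  have W: "\<forall>n\<ge>n1. (\<Sum>k\<le>n. w k) \<le> C * real n powr (1/(1-r)) * ln (real n) powr (r/(1-r))"
    using assms(8) by (simp add: Wo_eq ex1 ex2)
  show False
    by (rule analysis_core[OF D0 w0 r01 cpos assms(7) Fpos key W])
qed

end
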